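(* Let $\rho\in\{1/2,1\}$, let $s>0$ and $\eta>0$ be real numbers, let $q\in\mathbb{C}$, and let $\epsilon<1$ be real. Define $\ell:(0,\infty)\to\mathbb{R}$ by $$\ell(\gamma) = -\rho\log(1+\gamma s) + \rho\,\frac{|q|^2}{\gamma^{-1}+s} + (\epsilon-1)\log\gamma - \eta\gamma .$$ Then $\ell$ has at most a single local maximum on $(0,\infty)$.
   Context: This function arises in a sparse Bayesian learning scheme: $\rho=1/2$ corresponds to a real signal model and $\rho=1$ to a complex one; $\epsilon$ is the shape parameter and $\eta$ the (positive) rate parameter of a gamma hyperprior; $s=\mathbf{h}^H\mathbf{C}^{-1}\mathbf{h}$ and $q=\mathbf{y}^H\mathbf{C}^{-1}\mathbf{h}$ for a nonzero vector $\mathbf{h}$, a vector $\mathbf{y}$, and a Hermitian positive definite matrix $\mathbf{C}$, so in particular $s>0$. The domain of $\ell$ is $(0,\infty)$. *)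

theory Defs
  imports "HOL-Analysis.Analysis"
begin

definition ell :: "real \<Rightarrow> real \<Rightarrow> complex \<Rightarrow> real \<Rightarrow> real \<Rightarrow> real \<Rightarrow> real" where
  "ell \<rho> s q \<epsilon> \<eta> \<gamma> =
     - \<rho> * ln (1 + \<gamma> * s) + \<rho> * ((cmod q)\<^sup>2 / (inverse \<gamma> + s))
     + (\<epsilon> - 1) * ln \<gamma> - \<eta> * \<gamma>"

definition local_max_on :: "(real \<Rightarrow> real) \<Rightarrow> real set \<Rightarrow> real \<Rightarrow> bool" where
  "local_max_on f S x \<longleftrightarrow> x \<in> S \<and> (\<exists>\<delta>>0. \<forall>y\<in>S. \<bar>y - x\<bar> < \<delta> \<longrightarrow> f y \<le> f x)"

end

theory Submission
  imports Defs "HOL-Computational_Algebra.Polynomial"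
begin

definition ellD :: "real \<Rightarrow> real \<Rightarrow> complex \<Rightarrow> real \<Rightarrow> real \<Rightarrow> real \<Rightarrow> real" where
  "ellD \<rho> s q \<epsilon> \<eta> \<gamma> = - \<rho> * s / (1 + \<gamma> * s) + \<rho> * (cmod q)\<^sup>2 / (1 + \<gamma> * s)\<^sup>2
     + (\<epsilon> - 1) / \<gamma> - \<eta>"

lemma ell_deriv:
  assumes "s > 0" "\<gamma> > 0"
  shows "(ell \<rho> s q \<epsilon> \<eta> has_real_derivative ellD \<rho> s q \<epsilon> \<eta> \<gamma>) (at \<gamma>)"
proof -
  have p: "1 + \<gamma> * s > 0" using assms by (smt (verit) mult_pos_pos)
  have i: "inverse \<gamma> + s > 0" using assms by (smt (verit) positive_imp_inverse_positive)
  have e: "inverse \<gamma> + s = (1 + \<gamma> * s) / \<gamma>" using assms by (simp add: field_simps)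
  have n: "\<gamma> \<noteq> 0" "1 + \<gamma> * s \<noteq> 0" using p assms by auto
  have "(ell \<rho> s q \<epsilon> \<eta> has_real_derivative (- \<rho> * (s / (1 + \<gamma> * s)) + \<rho> * ((cmod q)\<^sup>2 * (inverse \<gamma> * inverse \<gamma>) / (inverse \<gamma> + s)^2) + (\<epsilon> - 1) * (1/\<gamma>) - \<eta>)) (at \<gamma>)"
    unfolding ell_def[abs_def]
    using p i assms
    by (auto intro!: derivative_eq_intros simp: power2_eq_square mult.commute)
  moreover have "(- \<rho> * (s / (1 + \<gamma> * s)) + \<rho> * ((cmod q)\<^sup>2 * (inverse \<gamma> * inverse \<gamma>) / (inverse \<gamma> + s)^2) + (\<epsilon> - 1) * (1/\<gamma>) - \<eta>) = ellD \<rho> s q \<epsilon> \<eta> \<gamma>"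
    unfolding ellD_def e using n
    by (simp add: divide_simps power2_eq_square)
  ultimately show ?thesis by simp
qed

definition P :: "real \<Rightarrow> real \<Rightarrow> complex \<Rightarrow> real \<Rightarrow> real \<Rightarrow> real poly" where
  "P \<rho> s q \<epsilon> \<eta> = [: \<epsilon> - 1, 2 * s * (\<epsilon> - 1) - \<rho> * s + \<rho> * (cmod q)\<^sup>2 - \<eta>,
       s\<^sup>2 * (\<epsilon> - 1) - \<rho> * s\<^sup>2 - 2 * \<eta> * s, - \<eta> * s\<^sup>2 :]"

lemma P_eq:
  assumes "s > 0" "\<gamma> > 0"
  shows "poly (P \<rho> s q \<epsilon> \<eta>) \<gamma> = \<gamma> * (1 + \<gamma> * s)\<^sup>2 * ellD \<rho> s q \<epsilon> \<eta> \<gamma>"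
proof -
  have p: "1 + \<gamma> * s > 0" using assms by (smt (verit) mult_pos_pos)
  have "\<gamma> \<noteq> 0" "1 + \<gamma> * s \<noteq> 0" using p assms by auto
  then show ?thesis unfolding P_def ellD_def
    by (simp add: divide_simps power2_eq_square) algebra
qed

lemma P_nz: "s > 0 \<Longrightarrow> \<eta> > 0 \<Longrightarrow> P \<rho> s q \<epsilon> \<eta> \<noteq> 0"
  unfolding P_def by auto

lemma P_deg: "degree (P \<rho> s q \<epsilon> \<eta>) \<le> 3"
  unfolding P_def by (auto simp: degree_pCons_eq_if)

lemma const_deriv_zero:
  fixes f :: "real \<Rightarrow> real"
  assumes "(f has_real_derivative D) (at m)" "d > 0" "\<forall>y. \<bar>m - y\<bar> < d \<longrightarrow> f y = f m"
  shows "D = 0"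
proof -
  have C: "\<forall>y. \<bar>m - y\<bar> < d \<longrightarrow> f y \<le> f m"
    using assms(3) by (metis order_refl)
  show ?thesis by (rule DERIV_local_max[OF assms(1,2) C])
qed

lemma between:
  fixes f f' :: "real \<Rightarrow> real"
  assumes der: "\<forall>x>0. (f has_real_derivative f' x) (at x)"
    and u: "0 < u" "u < v"
    and hu: "f v < f u \<or> local_max_on f {0<..} u"
    and hv: "local_max_on f {0<..} v"
  shows "\<exists>c. u < c \<and> c < v \<and> f' c = 0"
proof -
  have "continuous_on {u..v} f"
  proof (intro continuous_at_imp_continuous_on ballI)
    fix x assume "x \<in> {u..v}"
    then have "x > 0" using u by auto
    then show "isCont f x" using der DERIV_isCont by blast
  qed
  then obtain c where c: "c \<in> {u..v}" "\<forall>y\<in>{u..v}. f c \<le> f y"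
    using continuous_attains_inf[of "{u..v}" f] u by auto
  consider "c = u" | "c = v" | "u < c \<and> c < v" using c(1) by force
  then show ?thesis
  proof cases
    case 1
    then have "f u \<le> f v" using c u by auto
    with hu have "local_max_on f {0<..} u" by auto
    then obtain \<delta> where d: "\<delta> > 0" "\<forall>y\<in>{0<..}. \<bar>y - u\<bar> < \<delta> \<longrightarrow> f y \<le> f u"
      unfolding local_max_on_def by auto
    define e where "e = min \<delta> (v - u)"
    define m where "m = u + e/2"
    have e: "e > 0" "e \<le> \<delta>" "e \<le> v - u" using d u unfolding e_def by auto
    have fy: "f y = f u" if "\<bar>m - y\<bar> < e/2 \<or> y = m" for y
    proof -
      have "u < y" "y < u + e" using that e unfolding m_def abs_less_iff by auto
      then have "f u \<le> f y" "f y \<le> f u" using c 1 e d u by auto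
      then show ?thesis by simp
    qed
    have "f' m = 0"
      using const_deriv_zero[of f "f' m" m "e/2"] der e u fy[of m] fy unfolding m_def by auto
    moreover have "u < m" "m < v" using e unfolding m_def by auto
    ultimately show ?thesis by blast
  next
    case 2
    obtain \<delta> where d: "\<delta> > 0" "\<forall>y\<in>{0<..}. \<bar>y - v\<bar> < \<delta> \<longrightarrow> f y \<le> f v"
      using hv unfolding local_max_on_def by auto
    define e where "e = min \<delta> (v - u)"
    define m where "m = v - e/2"
    have e: "e > 0" "e \<le> \<delta>" "e \<le> v - u" using d u unfolding e_def by auto
    have fy: "f y = f v" if "\<bar>m - y\<bar> < e/2 \<or> y = m" for y
    proof -
      have "v - e < y" "y < v" using that e unfolding m_def abs_less_iff by auto
      then have "f v \<le> f y" "f y \<le> f v" using c 2 e d u by auto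
      then show ?thesis by simp
    qed
    have "f' m = 0"
      using const_deriv_zero[of f "f' m" m "e/2"] der e u fy[of m] fy unfolding m_def by auto
    moreover have "u < m" "m < v" using e unfolding m_def by auto
    ultimately show ?thesis by blast
  next
    case 3
    have A: "(f has_real_derivative f' c) (at c)" using der 3 u by auto
    have B: "0 < min (c - u) (v - c)" using 3 by auto
    have C: "\<forall>y. \<bar>c - y\<bar> < min (c - u) (v - c) \<longrightarrow> f c \<le> f y"
      using c(2) unfolding abs_less_iff by auto
    have "f' c = 0" by (rule DERIV_local_min[OF A B C])
    then show ?thesis using 3 by blast
  qed
qed

lemma zero_at_max:
  fixes f f' :: "real \<Rightarrow> real"
  assumes der: "\<forall>x>0. (f has_real_derivative f' x) (at x)"
    and h: "local_max_on f {0<..} a"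
  shows "a > 0 \<and> f' a = 0"
proof -
  obtain \<delta> where d: "a > 0" "\<delta> > 0" "\<forall>y\<in>{0<..}. \<bar>y - a\<bar> < \<delta> \<longrightarrow> f y \<le> f a"
    using h unfolding local_max_on_def by auto
  have A: "(f has_real_derivative f' a) (at a)" using der d by auto
  have B: "0 < min \<delta> a" using d by auto
  have C: "\<forall>y. \<bar>a - y\<bar> < min \<delta> a \<longrightarrow> f y \<le> f a"
    using d by (auto simp: abs_minus_commute)
  have "f' a = 0" by (rule DERIV_local_max[OF A B C])
  with d show ?thesis by simp
qed

lemma small_point:
  assumes "s > 0" "\<eta> > 0" "\<epsilon> < 1" "\<rho> \<ge> 0" "a > 0"
  shows "\<exists>x0. 0 < x0 \<and> x0 < a \<and> ell \<rho> s q \<epsilon> \<eta> x0 > ell \<rho> s q \<epsilon> \<eta> a"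
proof -
  define M where "M = \<bar>ell \<rho> s q \<epsilon> \<eta> a + \<rho> * ln (1 + a * s) + \<eta> * a + 1\<bar>"
  define x0 where "x0 = min (a/2) (exp (- M / (1 - \<epsilon>)))"
  have x0: "x0 > 0" "x0 < a" using assms unfolding x0_def by auto
  have "ln x0 \<le> ln (exp (- M / (1 - \<epsilon>)))"
    using x0 unfolding x0_def by (subst ln_le_cancel_iff) auto
  then have l: "ln x0 \<le> - M / (1 - \<epsilon>)" by simp
  have "(\<epsilon> - 1) * ln x0 \<ge> (\<epsilon> - 1) * (- M / (1 - \<epsilon>))"
    using l assms by (intro mult_left_mono_neg) auto
  also have "(\<epsilon> - 1) * (- M / (1 - \<epsilon>)) = M" using assms by (simp add: field_simps)
  finally have t1: "(\<epsilon> - 1) * ln x0 \<ge> M" .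
  have "1 + x0 * s \<le> 1 + a * s" using x0 assms by (intro add_left_mono mult_right_mono) auto
  moreover have "0 < 1 + x0 * s" using x0 assms by (smt (verit) mult_pos_pos)
  ultimately have "ln (1 + x0 * s) \<le> ln (1 + a * s)" by (subst ln_le_cancel_iff) auto
  from mult_left_mono[OF this assms(4)]
  have t2: "- \<rho> * ln (1 + x0 * s) \<ge> - \<rho> * ln (1 + a * s)" by linarith
  have "inverse x0 + s > 0" using x0 assms by (smt (verit) positive_imp_inverse_positive)
  then have t3: "\<rho> * ((cmod q)\<^sup>2 / (inverse x0 + s)) \<ge> 0" using assms
    by (intro mult_nonneg_nonneg divide_nonneg_nonneg) auto
  have "\<eta> * x0 \<le> \<eta> * a" using x0 assms by (intro mult_left_mono) auto
  then have t4: "- \<eta> * x0 \<ge> - \<eta> * a" by linarith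
  have "ell \<rho> s q \<epsilon> \<eta> x0 \<ge> - \<rho> * ln (1 + a * s) + M - \<eta> * a"
    unfolding ell_def using t1 t2 t3 t4 by linarith
  moreover have "M \<ge> ell \<rho> s q \<epsilon> \<eta> a + \<rho> * ln (1 + a * s) + \<eta> * a + 1"
    unfolding M_def by linarith
  ultimately show ?thesis using x0 by (intro exI[of _ x0]) auto
qed

theorem proposition1:
  fixes \<rho> s \<eta> \<epsilon> :: real and q :: complex
  assumes "\<rho> = 1/2 \<or> \<rho> = 1"
    and "s > 0" and "\<eta> > 0" and "\<epsilon> < 1"
  shows "\<forall>a b. local_max_on (ell \<rho> s q \<epsilon> \<eta>) {0<..} a
            \<and> local_max_on (ell \<rho> s q \<epsilon> \<eta>) {0<..} b \<longrightarrow> a = b"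
proof -
  let ?f = "ell \<rho> s q \<epsilon> \<eta>"
  let ?f' = "ellD \<rho> s q \<epsilon> \<eta>"
  have rho: "\<rho> \<ge> 0" using assms(1) by auto
  have der: "\<forall>x>0. (?f has_real_derivative ?f' x) (at x)"
    using ell_deriv assms(2) by blast
  have root: "poly (P \<rho> s q \<epsilon> \<eta>) x = 0" if "x > 0" "?f' x = 0" for x
    using P_eq[OF assms(2) that(1)] that by simp
  have fin: "finite {x. poly (P \<rho> s q \<epsilon> \<eta>) x = 0}"
    using P_nz assms poly_roots_finite by blast
  have cardb: "card {x. poly (P \<rho> s q \<epsilon> \<eta>) x = 0} \<le> 3"
    using card_poly_roots_bound[of "P \<rho> s q \<epsilon> \<eta>"] P_nz[OF assms(2,3)] P_deg
    by (meson le_trans)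
  have nolt: False if a: "local_max_on ?f {0<..} a" and b: "local_max_on ?f {0<..} b" and ab: "a < b" for a b
  proof -
    have za: "a > 0" "?f' a = 0" using zero_at_max[OF der a] by auto
    have zb: "b > 0" "?f' b = 0" using zero_at_max[OF der b] by auto
    obtain x0 where x0: "0 < x0" "x0 < a" "?f x0 > ?f a"
      using small_point[OF assms(2,3,4) rho za(1)] by auto
    obtain c1 where c1: "x0 < c1" "c1 < a" "?f' c1 = 0"
      using between[OF der x0(1,2) _ a] x0(3) by auto
    obtain c2 where c2: "a < c2" "c2 < b" "?f' c2 = 0"
      using between[OF der za(1) ab _ b] a by auto
    have sub: "{c1, a, c2, b} \<subseteq> {x. poly (P \<rho> s q \<epsilon> \<eta>) x = 0}"
      using root c1 c2 za zb x0 by auto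
    have "card {c1, a, c2, b} = 4" using c1 c2 ab by auto
    moreover have "card {c1, a, c2, b} \<le> 3" using card_mono[OF fin sub] cardb by linarith
    ultimately show False by simp
  qed
  show ?thesis
  proof (intro allI impI)
    fix a b assume h: "local_max_on ?f {0<..} a \<and> local_max_on ?f {0<..} b"
    show "a = b"
    proof (rule ccontr)
      assume "a \<noteq> b"
      then consider "a < b" | "b < a" by linarith
      then show False using nolt h by metis
    qed
  qed
qed

end
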